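(* Consider the discrete second-price auction. In the model with ties, the unique equilibrium is the profile in which every player uses $\beta(v)=v$ for all $v\in X$. In the model without ties, the set of equilibria is precisely the set of strategy profiles in which every player $i$ uses a bidding function with $\beta_i(v)\in\{v,\,v+\delta\}\cap X$ for every $v\in X$ (i.e. each player bids either their valuation or their valuation plus $\delta$).
   Context: Model. There are $n\ge 2$ risk-neutral bidders competing for one indivisible object. Fix $\delta>0$ and $x\in\mathbb N$ and let $X=\{0,\delta,2\delta,\dots,x\delta\}$. Each bidder $i$ privately learns a value $v_i\in X$; values are drawn independently across bidders and every element of $X$ has strictly positive probability. Each bidder submits a bid $b_i\in X$. A (pure) strategy of bidder $i$ is a bidding function $\beta_i:X\to X$. Tie rules: in the model without ties, bidder $i$ wins iff $b_i>b_j$ for all $j\neq i$ (if the highest bid is tied, nobody wins); in the model with ties, if $m$ bidders submit the highest bid, each of them wins with probability $1/m$. In the second-price auction the winner receives the object and pays the highest bid among the other bidders; payoff is value minus payment if winning and $0$ otherwise. An equilibrium is a profile of bidding functions such that each bidder's bidding function maximises their expected payoff given the others' bidding functions (a pure-strategy Bayes–Nash equilibrium) and such that no bidder uses a weakly dominated bidding function (a bidding function is weakly dominated if some other bidding function yields at least as high expected payoff against every profile of opponents' bidding functions, and strictly higher against some). *)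

theory Defs
  imports Main "HOL-Library.FuncSet" Complex_Main
begin

text \<open>The flag ties selects the model: True = model with ties (uniform random
  tie-breaking among the highest bidders), False = model without ties
  (a tied highest bid means nobody wins).\<close>

definition grid :: "real \<Rightarrow> nat \<Rightarrow> real set" where
  "grid \<delta> x = (\<lambda>k. real k * \<delta>) ` {0..x}"

definition bidfun :: "real \<Rightarrow> nat \<Rightarrow> (real \<Rightarrow> real) \<Rightarrow> bool" where
  "bidfun \<delta> x \<beta> \<longleftrightarrow> (\<forall>v\<in>grid \<delta> x. \<beta> v \<in> grid \<delta> x)"

definition profile :: "nat \<Rightarrow> real \<Rightarrow> nat \<Rightarrow> (nat \<Rightarrow> real \<Rightarrow> real) \<Rightarrow> bool" where
  "profile n \<delta> x b \<longleftrightarrow> (\<forall>i<n. bidfun \<delta> x (b i))"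

definition win_prob :: "bool \<Rightarrow> nat \<Rightarrow> nat \<Rightarrow> (nat \<Rightarrow> real) \<Rightarrow> real" where
  "win_prob ties n i bids =
     (if ties then
        (if (\<forall>j<n. bids j \<le> bids i)
         then 1 / real (card {j. j < n \<and> bids j = bids i}) else 0)
      else
        (if (\<forall>j<n. j \<noteq> i \<longrightarrow> bids j < bids i) then 1 else 0))"

definition price :: "nat \<Rightarrow> nat \<Rightarrow> (nat \<Rightarrow> real) \<Rightarrow> real" where
  "price n i bids = Max {bids j | j. j < n \<and> j \<noteq> i}"

definition ex_post_payoff :: "bool \<Rightarrow> nat \<Rightarrow> nat \<Rightarrow> real \<Rightarrow> (nat \<Rightarrow> real) \<Rightarrow> real" where
  "ex_post_payoff ties n i v bids = win_prob ties n i bids * (v - price n i bids)"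

text \<open>Expected payoff of bidder i under profile b, where p j w is the probability
  that bidder j has value w (values independent across bidders).\<close>
definition exp_payoff ::
  "bool \<Rightarrow> nat \<Rightarrow> real \<Rightarrow> nat \<Rightarrow> (nat \<Rightarrow> real \<Rightarrow> real) \<Rightarrow> nat \<Rightarrow> (nat \<Rightarrow> real \<Rightarrow> real) \<Rightarrow> real" where
  "exp_payoff ties n \<delta> x p i b =
     (\<Sum>vs\<in>Pi\<^sub>E {..<n} (\<lambda>_. grid \<delta> x).
        (\<Prod>j<n. p j (vs j)) * ex_post_payoff ties n i (vs i) (\<lambda>j. b j (vs j)))"

definition best_response ::
  "bool \<Rightarrow> nat \<Rightarrow> real \<Rightarrow> nat \<Rightarrow> (nat \<Rightarrow> real \<Rightarrow> real) \<Rightarrow> nat \<Rightarrow> (nat \<Rightarrow> real \<Rightarrow> real) \<Rightarrow> bool" where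
  "best_response ties n \<delta> x p i b \<longleftrightarrow>
     (\<forall>\<beta>'. bidfun \<delta> x \<beta>' \<longrightarrow> exp_payoff ties n \<delta> x p i (b(i := \<beta>')) \<le> exp_payoff ties n \<delta> x p i b)"

definition weakly_dominated ::
  "bool \<Rightarrow> nat \<Rightarrow> real \<Rightarrow> nat \<Rightarrow> (nat \<Rightarrow> real \<Rightarrow> real) \<Rightarrow> nat \<Rightarrow> (real \<Rightarrow> real) \<Rightarrow> bool" where
  "weakly_dominated ties n \<delta> x p i \<beta> \<longleftrightarrow>
     (\<exists>\<beta>'. bidfun \<delta> x \<beta>' \<and>
        (\<forall>b. profile n \<delta> x b \<longrightarrow>
            exp_payoff ties n \<delta> x p i (b(i := \<beta>')) \<ge> exp_payoff ties n \<delta> x p i (b(i := \<beta>))) \<and>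
        (\<exists>b. profile n \<delta> x b \<and>
            exp_payoff ties n \<delta> x p i (b(i := \<beta>')) > exp_payoff ties n \<delta> x p i (b(i := \<beta>))))"

definition equilibrium ::
  "bool \<Rightarrow> nat \<Rightarrow> real \<Rightarrow> nat \<Rightarrow> (nat \<Rightarrow> real \<Rightarrow> real) \<Rightarrow> (nat \<Rightarrow> real \<Rightarrow> real) \<Rightarrow> bool" where
  "equilibrium ties n \<delta> x p b \<longleftrightarrow>
     (\<forall>i<n. best_response ties n \<delta> x p i b \<and> \<not> weakly_dominated ties n \<delta> x p i (b i))"

end

theory Submission
  imports Defs
begin

definition good :: "bool \<Rightarrow> real \<Rightarrow> nat \<Rightarrow> real \<Rightarrow> real \<Rightarrow> bool" where
  "good t \<delta> x v c \<longleftrightarrow> (if t then c = v else c \<in> {v, v + \<delta>} \<inter> grid \<delta> x)"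

lemma grid_idx:
  assumes "\<delta> > 0" "a \<in> grid \<delta> x" "b \<in> grid \<delta> x" "a < b"
  obtains k l where "a = real k * \<delta>" "b = real l * \<delta>" "k < l" "l \<le> x"
proof -
  obtain k where k: "a = real k * \<delta>" "k \<le> x" using assms(2) unfolding grid_def by force
  obtain l where l: "b = real l * \<delta>" "l \<le> x" using assms(3) unfolding grid_def by force
  have "real k < real l" using assms(1,4) k l by (simp add: mult_less_cancel_right)
  hence "k < l" by simp
  thus ?thesis using that k l by blast
qed

lemma grid_disc:
  assumes "\<delta> > 0" "a \<in> grid \<delta> x" "b \<in> grid \<delta> x" "a < b"
  shows "a + \<delta> \<le> b"
proof -
  obtain k l where kl: "a = real k * \<delta>" "b = real l * \<delta>" "k < l" "l \<le> x"
    using grid_idx[OF assms] by blast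
  have "real (k + 1) \<le> real l" using kl(3) by (simp only: of_nat_le_iff)
  hence "real (k + 1) * \<delta> \<le> real l * \<delta>" using assms(1) by (simp add: mult_right_mono)
  thus ?thesis using kl by (simp add: algebra_simps)
qed

lemma grid_succ:
  assumes "\<delta> > 0" "a \<in> grid \<delta> x" "b \<in> grid \<delta> x" "a < b"
  shows "a + \<delta> \<in> grid \<delta> x"
proof -
  obtain k l where kl: "a = real k * \<delta>" "b = real l * \<delta>" "k < l" "l \<le> x"
    using grid_idx[OF assms] by blast
  have "a + \<delta> = real (k + 1) * \<delta>" using kl by (simp add: algebra_simps)
  moreover have "k + 1 \<in> {0..x}" using kl by simp
  ultimately show ?thesis unfolding grid_def by blast
qed

lemma finite_grid: "finite (grid \<delta> x)" unfolding grid_def by simp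

lemma price_set:
  fixes n i :: nat
  assumes "n \<ge> 2" "i < n"
  shows "finite {bids j | j. j < n \<and> j \<noteq> i}" "{bids j | j. j < n \<and> j \<noteq> i} \<noteq> {}"
proof -
  show "finite {bids j | j. j < n \<and> j \<noteq> i}" 
  proof (rule finite_image_set)
    show "finite {j. j < n \<and> j \<noteq> i}" by (rule finite_subset[of _ "{..<n}"]) auto
  qed
  let ?j = "if i = 0 then 1 else 0 :: nat"
  have "?j < n" "?j \<noteq> i" using assms by auto
  thus "{bids j | j. j < n \<and> j \<noteq> i} \<noteq> {}" by blast
qed

lemma price_ge:
  assumes "n \<ge> 2" "i < n" "j < n" "j \<noteq> i"
  shows "bids j \<le> price n i bids"
  unfolding price_def using price_set[OF assms(1,2)] assms(3,4) by (intro Max_ge) blast+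

lemma price_ex:
  assumes "n \<ge> 2" "i < n"
  shows "\<exists>j<n. j \<noteq> i \<and> bids j = price n i bids"
proof -
  have "price n i bids \<in> {bids j | j. j < n \<and> j \<noteq> i}"
    unfolding price_def using price_set[OF assms, of bids] by (intro Max_in) auto
  thus ?thesis by auto
qed

lemma price_cong:
  assumes "\<And>j. j \<noteq> i \<Longrightarrow> f j = g j"
  shows "price n i f = price n i g"
proof -
  have "{f j |j. j < n \<and> j \<noteq> i} = {g j |j. j < n \<and> j \<noteq> i}" using assms by force
  thus ?thesis unfolding price_def by simp
qed

lemma price_const:
  assumes "n \<ge> 2" "i < n" "\<forall>j<n. j \<noteq> i \<longrightarrow> bids j = d"
  shows "price n i bids = d"
  using price_ex[OF assms(1,2), of bids] assms(3) by metis

lemma win_bounds: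
  assumes "i < n"
  shows "0 \<le> win_prob t n i bids" "win_prob t n i bids \<le> 1"
proof -
  have "finite {j. j < n \<and> bids j = bids i}" by simp
  moreover have "i \<in> {j. j < n \<and> bids j = bids i}" using assms by simp
  ultimately have "card {j. j < n \<and> bids j = bids i} \<ge> 1"
    by (metis One_nat_def Suc_leI card_gt_0_iff empty_iff)
  hence "1 / real (card {j. j < n \<and> bids j = bids i}) \<le> 1" by simp
  thus "0 \<le> win_prob t n i bids" "win_prob t n i bids \<le> 1"
    unfolding win_prob_def by auto
qed

lemma upper:
  assumes "i < n"
  shows "ex_post_payoff t n i v bids \<le> max 0 (v - price n i bids)"
proof -
  note w = win_bounds[OF assms, of t bids]
  show ?thesis
  proof (cases "v - price n i bids \<ge> 0")
    case True
    hence "win_prob t n i bids * (v - price n i bids) \<le> 1 * (v - price n i bids)"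
      using w by (intro mult_right_mono) auto
    thus ?thesis unfolding ex_post_payoff_def by simp
  next
    case False
    hence "win_prob t n i bids * (v - price n i bids) \<le> 0"
      using w by (intro mult_nonneg_nonpos) auto
    thus ?thesis unfolding ex_post_payoff_def by simp
  qed
qed

lemma good_exact:
  assumes "\<delta> > 0" "n \<ge> 2" "i < n" "v \<in> grid \<delta> x"
    and others: "\<forall>j<n. j \<noteq> i \<longrightarrow> bids j \<in> grid \<delta> x"
    and g: "good t \<delta> x v (bids i)"
  shows "ex_post_payoff t n i v bids = max 0 (v - price n i bids)"
proof -
  let ?m = "price n i bids"
  obtain j0 where j0: "j0 < n" "j0 \<noteq> i" "bids j0 = ?m" using price_ex[OF assms(2,3)] by blast
  have mg: "?m \<in> grid \<delta> x" using others j0 by metis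
  have ge: "\<And>j. j < n \<Longrightarrow> j \<noteq> i \<Longrightarrow> bids j \<le> ?m" using price_ge[OF assms(2,3)] by blast
  show ?thesis
  proof (cases t)
    case True
    hence bi: "bids i = v" using g by (simp add: good_def)
    consider "?m < v" | "?m = v" | "?m > v" by linarith
    thus ?thesis
    proof cases
      case 1
      have all: "\<forall>j<n. bids j \<le> bids i" using ge 1 bi by (metis less_eq_real_def order_trans)
      have "{j. j < n \<and> bids j = bids i} = {i}" using ge 1 bi assms(3) by force
      hence "win_prob t n i bids = 1" using all True by (simp add: win_prob_def)
      thus ?thesis using 1 by (simp add: ex_post_payoff_def)
    next
      case 2 thus ?thesis by (simp add: ex_post_payoff_def)
    next
      case 3
      hence "\<not> (\<forall>j<n. bids j \<le> bids i)" using j0 bi by force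
      hence "win_prob t n i bids = 0" using True unfolding win_prob_def by (simp only: if_True if_False)
      thus ?thesis using 3 by (simp add: ex_post_payoff_def)
    qed
  next
    case False
    hence bi: "bids i = v \<or> bids i = v + \<delta>" using g by (simp add: good_def)
    consider "?m < v" | "?m = v" | "?m > v" by linarith
    thus ?thesis
    proof cases
      case 1
      have all: "\<forall>j<n. j \<noteq> i \<longrightarrow> bids j < bids i" using ge 1 bi assms(1)
        by (smt (verit))
      hence "win_prob t n i bids = 1" using False by (simp add: win_prob_def)
      thus ?thesis using 1 by (simp add: ex_post_payoff_def)
    next
      case 2 thus ?thesis by (simp add: ex_post_payoff_def)
    next
      case 3
      have "v + \<delta> \<le> ?m" using grid_disc[OF assms(1,4) mg 3] .
      hence "\<not> (\<forall>j<n. j \<noteq> i \<longrightarrow> bids j < bids i)" using j0 bi 3 by force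
      hence "win_prob t n i bids = 0" using False by (simp add: win_prob_def)
      thus ?thesis using 3 by (simp add: ex_post_payoff_def)
    qed
  qed
qed

lemma bad_strict:
  assumes "\<delta> > 0" "n \<ge> 2" "i < n" "v \<in> grid \<delta> x" "c \<in> grid \<delta> x"
    and ng: "\<not> good t \<delta> x v c"
  shows "\<exists>d\<in>grid \<delta> x. \<forall>bids. (\<forall>j<n. j \<noteq> i \<longrightarrow> bids j = d) \<longrightarrow> bids i = c \<longrightarrow>
           ex_post_payoff t n i v bids < max 0 (v - d)"
proof (cases t)
  case True
  hence cv: "c \<noteq> v" using ng by (simp add: good_def)
  show ?thesis
  proof (intro bexI[of _ c] allI impI)
    fix bids :: "nat \<Rightarrow> real" assume o: "\<forall>j<n. j \<noteq> i \<longrightarrow> bids j = c" and bi: "bids i = c"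
    have pr: "price n i bids = c" using price_const[OF assms(2,3) o] .
    have all: "\<forall>j<n. bids j = c" using o bi by metis
    hence "{j. j < n \<and> bids j = bids i} = {..<n}" using bi by auto
    hence "win_prob t n i bids = 1 / real n" using True all bi by (simp add: win_prob_def)
    hence e: "ex_post_payoff t n i v bids = (v - c) / real n" using pr by (simp add: ex_post_payoff_def)
    have n: "real n \<ge> 2" using assms(2) by simp
    show "ex_post_payoff t n i v bids < max 0 (v - c)"
    proof (cases "v > c")
      case True
      have "(v - c) / real n < (v - c)" using True n by (simp add: divide_less_eq)
      thus ?thesis using e by simp
    next
      case False
      hence "v - c < 0" using cv by simp
      hence "(v - c) / real n < 0" using n by (simp add: divide_less_0_iff)
      thus ?thesis using e by simp
    qed
  qed (rule assms(5))
next
  case False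
  hence cv: "c \<noteq> v" "c \<noteq> v + \<delta>" using ng assms(5) by (auto simp: good_def)
  show ?thesis
  proof (cases "c < v")
    case True
    show ?thesis
    proof (intro bexI[of _ c] allI impI)
      fix bids :: "nat \<Rightarrow> real" assume o: "\<forall>j<n. j \<noteq> i \<longrightarrow> bids j = c" and bi: "bids i = c"
      obtain j0 where j0: "j0 < n" "j0 \<noteq> i" "bids j0 = price n i bids" using price_ex[OF assms(2,3)] by blast
      have "\<not> (\<forall>j<n. j \<noteq> i \<longrightarrow> bids j < bids i)" using j0 o bi by force
      hence "win_prob t n i bids = 0" using False by (simp add: win_prob_def)
      thus "ex_post_payoff t n i v bids < max 0 (v - c)" using True by (simp add: ex_post_payoff_def)
    qed (rule assms(5))
  next
    case cg: False
    hence "v < c" using cv by simp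
    hence vd: "v + \<delta> \<le> c" "v + \<delta> \<in> grid \<delta> x"
      using grid_disc[OF assms(1,4,5)] grid_succ[OF assms(1,4,5)] by auto
    hence lt: "v + \<delta> < c" using cv by simp
    show ?thesis
    proof (intro bexI[of _ "v + \<delta>"] allI impI)
      fix bids :: "nat \<Rightarrow> real" assume o: "\<forall>j<n. j \<noteq> i \<longrightarrow> bids j = v + \<delta>" and bi: "bids i = c"
      have pr: "price n i bids = v + \<delta>" using price_const[OF assms(2,3) o] .
      have "\<forall>j<n. j \<noteq> i \<longrightarrow> bids j < bids i" using o bi lt by simp
      hence "win_prob t n i bids = 1" using False by (simp add: win_prob_def)
      thus "ex_post_payoff t n i v bids < max 0 (v - (v + \<delta>))" using pr assms(1) by (simp add: ex_post_payoff_def)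
    qed (rule vd(2))
  qed
qed


abbreviation U :: "nat \<Rightarrow> real \<Rightarrow> nat \<Rightarrow> (nat \<Rightarrow> real \<Rightarrow> real) \<Rightarrow> nat \<Rightarrow> (nat \<Rightarrow> real \<Rightarrow> real) \<Rightarrow> real" where
  "U n \<delta> x p i b \<equiv> (\<Sum>vs\<in>PiE {..<n} (\<lambda>_. grid \<delta> x).
      (\<Prod>j<n. p j (vs j)) * max 0 (vs i - price n i (\<lambda>j. b j (vs j))))"

lemma P_nonneg:
  fixes p :: "nat \<Rightarrow> real \<Rightarrow> real"
  assumes "\<forall>j<n. \<forall>w\<in>grid \<delta> x. p j w > 0" "vs \<in> PiE {..<n} (\<lambda>_. grid \<delta> x)"
  shows "0 < (\<Prod>j<n. p j (vs j))"
  by (rule prod_pos) (use assms in \<open>auto simp: PiE_iff\<close>)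

lemma term_le:
  fixes p :: "nat \<Rightarrow> real \<Rightarrow> real"
  assumes "\<forall>j<n. \<forall>w\<in>grid \<delta> x. p j w > 0" "i < n" "vs \<in> PiE {..<n} (\<lambda>_. grid \<delta> x)"
  shows "(\<Prod>j<n. p j (vs j)) * ex_post_payoff t n i (vs i) (\<lambda>j. (b(i := \<beta>)) j (vs j))
     \<le> (\<Prod>j<n. p j (vs j)) * max 0 (vs i - price n i (\<lambda>j. b j (vs j)))"
proof -
  have pc: "price n i (\<lambda>j. (b(i := \<beta>)) j (vs j)) = price n i (\<lambda>j. b j (vs j))"
    by (rule price_cong) simp
  show ?thesis using upper[OF assms(2), of t "vs i" "\<lambda>j. (b(i := \<beta>)) j (vs j)"] pc
      P_nonneg[OF assms(1,3)]
    by (intro mult_left_mono) auto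
qed

lemma exp_le:
  assumes "\<forall>j<n. \<forall>w\<in>grid \<delta> x. p j w > 0" "i < n"
  shows "exp_payoff t n \<delta> x p i (b(i := \<beta>)) \<le> U n \<delta> x p i b"
  unfolding exp_payoff_def by (rule sum_mono) (rule term_le[OF assms])

lemma exp_eq:
  assumes "\<delta> > 0" "n \<ge> 2" "i < n" "profile n \<delta> x b"
    and g: "\<forall>w\<in>grid \<delta> x. good t \<delta> x w (\<beta> w)"
  shows "exp_payoff t n \<delta> x p i (b(i := \<beta>)) = U n \<delta> x p i b"
  unfolding exp_payoff_def
proof (rule sum.cong[OF refl])
  fix vs assume vs: "vs \<in> PiE {..<n} (\<lambda>_. grid \<delta> x)"
  hence vg: "\<And>j. j < n \<Longrightarrow> vs j \<in> grid \<delta> x" by (auto simp: PiE_iff)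
  have pc: "price n i (\<lambda>j. (b(i := \<beta>)) j (vs j)) = price n i (\<lambda>j. b j (vs j))"
    by (rule price_cong) simp
  have "ex_post_payoff t n i (vs i) (\<lambda>j. (b(i := \<beta>)) j (vs j))
      = max 0 (vs i - price n i (\<lambda>j. (b(i := \<beta>)) j (vs j)))"
  proof (rule good_exact[OF assms(1,2,3) vg[OF assms(3)]])
    show "\<forall>j<n. j \<noteq> i \<longrightarrow> (b(i := \<beta>)) j (vs j) \<in> grid \<delta> x"
      using assms(4) vg unfolding profile_def bidfun_def by auto
    show "good t \<delta> x (vs i) ((b(i := \<beta>)) i (vs i))" using g vg[OF assms(3)] by simp
  qed
  thus "(\<Prod>j<n. p j (vs j)) * ex_post_payoff t n i (vs i) (\<lambda>j. (b(i := \<beta>)) j (vs j))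
     = (\<Prod>j<n. p j (vs j)) * max 0 (vs i - price n i (\<lambda>j. b j (vs j)))" using pc by simp
qed

lemma exp_lt:
  assumes "\<delta> > 0" "n \<ge> 2" "i < n" "\<forall>j<n. \<forall>w\<in>grid \<delta> x. p j w > 0"
    and v0: "v0 \<in> grid \<delta> x" "\<beta> v0 \<in> grid \<delta> x" "\<not> good t \<delta> x v0 (\<beta> v0)"
  shows "\<exists>d\<in>grid \<delta> x. exp_payoff t n \<delta> x p i ((\<lambda>_ _. d)(i := \<beta>)) < U n \<delta> x p i (\<lambda>_ _. d)"
proof -
  obtain d where d: "d \<in> grid \<delta> x" and dd: "\<forall>bids. (\<forall>j<n. j \<noteq> i \<longrightarrow> bids j = d) \<longrightarrow> bids i = \<beta> v0 \<longrightarrow>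
           ex_post_payoff t n i v0 bids < max 0 (v0 - d)"
    using bad_strict[OF assms(1,2,3) v0] by blast
  let ?A = "PiE {..<n} (\<lambda>_. grid \<delta> x)"
  let ?vs = "restrict (\<lambda>_. v0) {..<n}"
  have vsA: "?vs \<in> ?A" using v0 by auto
  have pc: "price n i (\<lambda>j. ((\<lambda>_ _. d)(i := \<beta>)) j (?vs j)) = d"
    by (rule price_const[OF assms(2,3)]) auto
  have pc2: "price n i (\<lambda>j. d) = d"
    by (rule price_const[OF assms(2,3)]) auto
  have strict: "ex_post_payoff t n i v0 (\<lambda>j. ((\<lambda>_ _. d)(i := \<beta>)) j (?vs j)) < max 0 (v0 - d)"
    using dd assms(3) by auto
  have "exp_payoff t n \<delta> x p i ((\<lambda>_ _. d)(i := \<beta>)) < U n \<delta> x p i (\<lambda>_ _. d)"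
    unfolding exp_payoff_def
  proof (rule sum_strict_mono_ex1)
    show "finite ?A" by (simp add: finite_PiE finite_grid)
    show "\<forall>vs\<in>?A. (\<Prod>j<n. p j (vs j)) * ex_post_payoff t n i (vs i) (\<lambda>j. ((\<lambda>_ _. d)(i := \<beta>)) j (vs j))
     \<le> (\<Prod>j<n. p j (vs j)) * max 0 (vs i - price n i (\<lambda>j. (\<lambda>_ _. d) j (vs j)))"
      using term_le[OF assms(4,3)] by blast
    have "(\<Prod>j<n. p j (?vs j)) * ex_post_payoff t n i (?vs i) (\<lambda>j. ((\<lambda>_ _. d)(i := \<beta>)) j (?vs j))
     < (\<Prod>j<n. p j (?vs j)) * max 0 (?vs i - price n i (\<lambda>j. (\<lambda>_ _. d) j (?vs j)))"
      using strict pc2 P_nonneg[OF assms(4) vsA] assms(3) by (intro mult_strict_left_mono) auto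
    thus "\<exists>vs\<in>?A. (\<Prod>j<n. p j (vs j)) * ex_post_payoff t n i (vs i) (\<lambda>j. ((\<lambda>_ _. d)(i := \<beta>)) j (vs j))
     < (\<Prod>j<n. p j (vs j)) * max 0 (vs i - price n i (\<lambda>j. (\<lambda>_ _. d) j (vs j)))"
      using vsA by blast
  qed
  thus ?thesis using d by blast
qed


lemma main_gen:
  fixes n x :: nat and \<delta> :: real and p :: "nat \<Rightarrow> real \<Rightarrow> real"
  assumes n2: "n \<ge> 2" and dp: "\<delta> > 0"
    and pp: "\<forall>i<n. \<forall>v\<in>grid \<delta> x. p i v > 0"
    and pb: "profile n \<delta> x b"
  shows "equilibrium t n \<delta> x p b \<longleftrightarrow> (\<forall>i<n. \<forall>v\<in>grid \<delta> x. good t \<delta> x v (b i v))"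
proof
  assume eq: "equilibrium t n \<delta> x p b"
  show "\<forall>i<n. \<forall>v\<in>grid \<delta> x. good t \<delta> x v (b i v)"
  proof (intro allI impI ballI, rule ccontr)
    fix i v assume i: "i < n" and v: "v \<in> grid \<delta> x" and ng: "\<not> good t \<delta> x v (b i v)"
    have bv: "b i v \<in> grid \<delta> x" using pb i v unfolding profile_def bidfun_def by blast
    have idg: "\<forall>w\<in>grid \<delta> x. good t \<delta> x w ((\<lambda>w. w) w)" by (simp add: good_def)
    have "weakly_dominated t n \<delta> x p i (b i)"
      unfolding weakly_dominated_def
    proof (intro exI[of _ "\<lambda>w. w"] conjI allI impI)
      show "bidfun \<delta> x (\<lambda>w. w)" by (simp add: bidfun_def)
      fix b' assume pb': "profile n \<delta> x b'"
      show "exp_payoff t n \<delta> x p i (b'(i := b i)) \<le> exp_payoff t n \<delta> x p i (b'(i := (\<lambda>w. w)))"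
        using exp_le[OF pp i, of t b' "b i"] exp_eq[OF dp n2 i pb' idg, of p] by simp
    next
      obtain d where d: "d \<in> grid \<delta> x"
        and lt: "exp_payoff t n \<delta> x p i ((\<lambda>_ _. d)(i := b i)) < U n \<delta> x p i (\<lambda>_ _. d)"
        using exp_lt[where \<beta>="b i", OF dp n2 i pp v bv ng] by blast
      have pd: "profile n \<delta> x (\<lambda>_ _. d)" using d by (simp add: profile_def bidfun_def)
      show "\<exists>b'. profile n \<delta> x b' \<and> exp_payoff t n \<delta> x p i (b'(i := (\<lambda>w. w))) > exp_payoff t n \<delta> x p i (b'(i := b i))"
        using pd lt exp_eq[OF dp n2 i pd idg, of p] by auto
    qed
    thus False using eq i unfolding equilibrium_def by blast
  qed
next
  assume g: "\<forall>i<n. \<forall>v\<in>grid \<delta> x. good t \<delta> x v (b i v)"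
  show "equilibrium t n \<delta> x p b"
    unfolding equilibrium_def
  proof (intro allI impI conjI)
    fix i assume i: "i < n"
    have gi: "\<forall>w\<in>grid \<delta> x. good t \<delta> x w (b i w)" using g i by blast
    show "best_response t n \<delta> x p i b"
      unfolding best_response_def
    proof (intro allI impI)
      fix \<beta>' assume "bidfun \<delta> x \<beta>'"
      show "exp_payoff t n \<delta> x p i (b(i := \<beta>')) \<le> exp_payoff t n \<delta> x p i b"
        using exp_le[OF pp i, of t b \<beta>'] exp_eq[OF dp n2 i pb gi, of p] by simp
    qed
    show "\<not> weakly_dominated t n \<delta> x p i (b i)"
    proof
      assume "weakly_dominated t n \<delta> x p i (b i)"
      then obtain \<beta>' b' where pb': "profile n \<delta> x b'"
        and gt: "exp_payoff t n \<delta> x p i (b'(i := \<beta>')) > exp_payoff t n \<delta> x p i (b'(i := b i))"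
        unfolding weakly_dominated_def by blast
      show False using gt exp_le[OF pp i, of t b' \<beta>'] exp_eq[OF dp n2 i pb' gi, of p] by simp
    qed
  qed
qed

theorem proposition1:
  fixes n x :: nat and \<delta> :: real and p :: "nat \<Rightarrow> real \<Rightarrow> real"
  assumes "n \<ge> 2" and "\<delta> > 0"
    and "\<forall>i<n. \<forall>v\<in>grid \<delta> x. p i v > 0"
    and "\<forall>i<n. (\<Sum>v\<in>grid \<delta> x. p i v) = 1"
  shows "(\<forall>b. profile n \<delta> x b \<longrightarrow>
            (equilibrium True n \<delta> x p b \<longleftrightarrow> (\<forall>i<n. \<forall>v\<in>grid \<delta> x. b i v = v)))
       \<and> (\<forall>b. profile n \<delta> x b \<longrightarrow>
            (equilibrium False n \<delta> x p b \<longleftrightarrow>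
               (\<forall>i<n. \<forall>v\<in>grid \<delta> x. b i v \<in> {v, v + \<delta>} \<inter> grid \<delta> x)))"
  using main_gen[OF assms(1,2,3), of _ True] main_gen[OF assms(1,2,3), of _ False]
  by (simp add: good_def)

end
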